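(* Let $m_1,m_2,m_3\ge 2$ be integers and let $P^{\mathbf{i}}\in\mathbb{R}^3$ be points indexed by multi-indices $\mathbf{i}=(i_1,i_2,i_3)$ with $i_j\in\{1,\dots,m_j\}$. For $k\in\{1,2,3\}$ let $e_k$ be the $k$-th unit multi-index, $I(k)=\{\mathbf{i}: i_j\in\{1,\dots,m_j\}\text{ for }j\ne k,\ i_k\in\{1,\dots,m_k-1\}\}$, $\Delta_k^{\mathbf{i}}=P^{\mathbf{i}+e_k}-P^{\mathbf{i}}$ for $\mathbf{i}\in I(k)$, and $C_k=\mathrm{coni}\{\Delta_k^{\mathbf{i}}:\mathbf{i}\in I(k)\}$. Define $H_1(x)=x_1-x_2-x_3$, $H_2(x)=x_1-x_2+x_3$, $H_3(x)=x_1+x_2-x_3$, $H_4(x)=x_1+x_2+x_3$ and $C_1^0=\{x: H_1(x)>0,H_2(x)>0,H_3(x)>0,H_4(x)>0\}\cup\{0\}$, $C_2^0=\{x: H_1(x)<0,H_2(x)<0,H_3(x)>0,H_4(x)>0\}\cup\{0\}$, $C_3^0=\{x: H_1(x)<0,H_2(x)>0,H_3(x)<0,H_4(x)>0\}\cup\{0\}$. If $\mathrm{conv}\{\Delta_k^{\mathbf{i}}:\mathbf{i}\in I(k)\}\subset C_k^0$ for $k=1,2,3$, then $C_1,C_2,C_3$ are cotransverse.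
   Context: The conical hull of $X\subseteq\mathbb{R}^3$ is $\mathrm{coni}\,X=\{\sum_{i=1}^n\lambda_i x_i: x_i\in X,\ n\in\mathbb{N},\ \lambda_i\ge0\}$ and the convex hull is $\mathrm{conv}\,X=\{\sum_{i=1}^n\lambda_i x_i: x_i\in X,\ n\in\mathbb{N},\ \lambda_i\ge0,\ \sum_i\lambda_i=1\}$; the convex hull of several cones means the convex hull of their union. A subset $X$ is a cone if $x\in X,\lambda\ge0\Rightarrow\lambda x\in X$. Two cones $C,D$ are transverse if $C\cup(-C)$ and $D\cup(-D)$ intersect only in $\{0\}$. Three cones $C_1,C_2,C_3$ are cotransverse if the origin is a vertex of the convex hull of $C_1,C_2,C_3$ and, for every $\{i,j,k\}=\{1,2,3\}$, $C_i$ and the convex hull of $C_j,C_k$ are transverse. *)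

theory Defs
  imports "HOL-Analysis.Analysis"
begin

definition coni :: "'a::real_vector set \<Rightarrow> 'a set" where
  "coni X = {y. \<exists>(n::nat) (x::nat \<Rightarrow> 'a) (l::nat \<Rightarrow> real).
      (\<forall>i<n. x i \<in> X \<and> l i \<ge> 0) \<and> y = (\<Sum>i<n. l i *\<^sub>R x i)}"

definition transverse :: "'a::real_vector set \<Rightarrow> 'a set \<Rightarrow> bool" where
  "transverse C D \<longleftrightarrow> (C \<union> uminus ` C) \<inter> (D \<union> uminus ` D) \<subseteq> {0}"

text \<open>Vertex of a convex set = extreme point.\<close>
definition cotransverse :: "'a::real_vector set \<Rightarrow> 'a set \<Rightarrow> 'a set \<Rightarrow> bool" where
  "cotransverse C1 C2 C3 \<longleftrightarrow>
     0 extreme_point_of (convex hull (C1 \<union> C2 \<union> C3)) \<and>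
     transverse C1 (convex hull (C2 \<union> C3)) \<and>
     transverse C2 (convex hull (C1 \<union> C3)) \<and>
     transverse C3 (convex hull (C1 \<union> C2))"

definition idxset :: "nat^3 \<Rightarrow> 3 \<Rightarrow> (nat^3) set" where
  "idxset m k = {i. \<forall>j. 1 \<le> i$j \<and> (if j = k then i$j \<le> m$j - 1 else i$j \<le> m$j)}"

definition Delta :: "(nat^3 \<Rightarrow> real^3) \<Rightarrow> 3 \<Rightarrow> nat^3 \<Rightarrow> real^3" where
  "Delta P k i = P (i + axis k 1) - P i"

definition Dset :: "nat^3 \<Rightarrow> (nat^3 \<Rightarrow> real^3) \<Rightarrow> 3 \<Rightarrow> (real^3) set" where
  "Dset m P k = Delta P k ` idxset m k"

definition H1 :: "real^3 \<Rightarrow> real" where "H1 x = x$1 - x$2 - x$3"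
definition H2 :: "real^3 \<Rightarrow> real" where "H2 x = x$1 - x$2 + x$3"
definition H3 :: "real^3 \<Rightarrow> real" where "H3 x = x$1 + x$2 - x$3"
definition H4 :: "real^3 \<Rightarrow> real" where "H4 x = x$1 + x$2 + x$3"

definition C0_1 :: "(real^3) set" where
  "C0_1 = {x. H1 x > 0 \<and> H2 x > 0 \<and> H3 x > 0 \<and> H4 x > 0} \<union> {0}"
definition C0_2 :: "(real^3) set" where
  "C0_2 = {x. H1 x < 0 \<and> H2 x < 0 \<and> H3 x > 0 \<and> H4 x > 0} \<union> {0}"
definition C0_3 :: "(real^3) set" where
  "C0_3 = {x. H1 x < 0 \<and> H2 x > 0 \<and> H3 x < 0 \<and> H4 x > 0} \<union> {0}"

end

theory Submission
  imports Defs
begin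

definition pc :: "(real^3 \<Rightarrow> real) list \<Rightarrow> (real^3) set" where
  "pc fs = {x. \<forall>f\<in>set fs. f x > 0} \<union> {0}"

lemma pc_add:
  assumes "\<forall>f\<in>set fs. linear f" "a \<in> pc fs" "b \<in> pc fs"
  shows "a + b \<in> pc fs"
proof (cases "a = 0 \<or> b = 0")
  case True then show ?thesis using assms by auto
next
  case False
  then have "\<forall>f\<in>set fs. f a > 0" "\<forall>f\<in>set fs. f b > 0" using assms unfolding pc_def by auto
  then have "\<forall>f\<in>set fs. f (a + b) > 0" using assms(1) by (simp add: linear_add add_pos_pos)
  then show ?thesis unfolding pc_def by auto
qed

lemma pc_scale:
  assumes "\<forall>f\<in>set fs. linear f" "a \<in> pc fs" "c \<ge> 0"
  shows "c *\<^sub>R a \<in> pc fs"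
proof (cases "a = 0 \<or> c = 0")
  case True then show ?thesis unfolding pc_def by auto
next
  case False
  then have "\<forall>f\<in>set fs. f a > 0" "c > 0" using assms unfolding pc_def by auto
  then have "\<forall>f\<in>set fs. f (c *\<^sub>R a) > 0" using assms(1) by (simp add: linear_cmul)
  then show ?thesis unfolding pc_def by auto
qed

lemma pc_zero: "0 \<in> pc fs" unfolding pc_def by auto

lemma pc_convex:
  assumes "\<forall>f\<in>set fs. linear f"
  shows "convex (pc fs)"
  unfolding convex_def
proof (intro ballI allI impI)
  fix x y and u v :: real
  assume "x \<in> pc fs" "y \<in> pc fs" "0 \<le> u" "0 \<le> v"
  then show "u *\<^sub>R x + v *\<^sub>R y \<in> pc fs"
    using pc_add[OF assms] pc_scale[OF assms] by metis
qed

lemma coni_sub: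
  assumes "X \<subseteq> K" "0 \<in> K" "\<And>a b. a \<in> K \<Longrightarrow> b \<in> K \<Longrightarrow> a + b \<in> K"
    "\<And>a c. a \<in> K \<Longrightarrow> c \<ge> 0 \<Longrightarrow> c *\<^sub>R a \<in> K"
  shows "coni X \<subseteq> K"
proof
  fix y assume "y \<in> coni X"
  then have "\<exists>(n::nat) x l. (\<forall>i<n. x i \<in> X \<and> l i \<ge> 0) \<and> y = (\<Sum>i<n. l i *\<^sub>R x i)"
    unfolding coni_def by simp
  then obtain n :: nat and x l where h: "\<forall>i<n. x i \<in> X \<and> l i \<ge> 0" "y = (\<Sum>i<n. l i *\<^sub>R x i)"
    by blast
  have "\<forall>k\<le>n. (\<Sum>i<k. l i *\<^sub>R x i) \<in> K"
  proof (intro allI impI)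
    fix k assume "k \<le> n"
    then show "(\<Sum>i<k. l i *\<^sub>R x i) \<in> K"
    proof (induction k)
      case 0 then show ?case using assms(2) by simp
    next
      case (Suc k)
      then have "k < n" by simp
      then have "l k *\<^sub>R x k \<in> K" using h(1) assms(1) assms(4)[of "x k" "l k"] by blast
      moreover have "(\<Sum>i<k. l i *\<^sub>R x i) \<in> K" using Suc by simp
      ultimately show ?case using assms(3) by (simp add: add.commute)
    qed
  qed
  then show "y \<in> K" using h(2) by simp
qed

lemma lin_comb: "linear (\<lambda>x::real^3. a * x$1 + b * x$2 + c * x$3)"
  by (rule linearI) (simp_all add: algebra_simps)

lemma C01: "C0_1 = pc [\<lambda>x. 1 * x$1 + (-1) * x$2 + (-1) * x$3, \<lambda>x. 1 * x$1 + (-1) * x$2 + 1 * x$3,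
   \<lambda>x. 1 * x$1 + 1 * x$2 + (-1) * x$3, \<lambda>x. 1 * x$1 + 1 * x$2 + 1 * x$3]"
  unfolding C0_1_def pc_def H1_def H2_def H3_def H4_def by auto
lemma C02: "C0_2 = pc [\<lambda>x. (-1) * x$1 + 1 * x$2 + 1 * x$3, \<lambda>x. (-1) * x$1 + 1 * x$2 + (-1) * x$3,
   \<lambda>x. 1 * x$1 + 1 * x$2 + (-1) * x$3, \<lambda>x. 1 * x$1 + 1 * x$2 + 1 * x$3]"
  unfolding C0_2_def pc_def H1_def H2_def H3_def H4_def by auto
lemma C03: "C0_3 = pc [\<lambda>x. (-1) * x$1 + 1 * x$2 + 1 * x$3, \<lambda>x. 1 * x$1 + (-1) * x$2 + 1 * x$3,
   \<lambda>x. (-1) * x$1 + (-1) * x$2 + 1 * x$3, \<lambda>x. 1 * x$1 + 1 * x$2 + 1 * x$3]"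
  unfolding C0_3_def pc_def H1_def H2_def H3_def H4_def by auto

abbreviation "K4 \<equiv> pc [\<lambda>x. 1 * x$1 + 1 * x$2 + 1 * x$3]"
abbreviation "K23 \<equiv> pc [\<lambda>x. (-1) * x$1 + 1 * x$2 + 1 * x$3, \<lambda>x. 1 * x$1 + 1 * x$2 + 1 * x$3]"
abbreviation "K13 \<equiv> pc [\<lambda>x. 1 * x$1 + (-1) * x$2 + 1 * x$3, \<lambda>x. 1 * x$1 + 1 * x$2 + 1 * x$3]"
abbreviation "K12 \<equiv> pc [\<lambda>x. 1 * x$1 + 1 * x$2 + (-1) * x$3, \<lambda>x. 1 * x$1 + 1 * x$2 + 1 * x$3]"

lemma coni_C0:
  assumes "convex hull X \<subseteq> pc fs" "\<forall>f\<in>set fs. linear f"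
  shows "coni X \<subseteq> pc fs"
  apply (rule coni_sub)
  using assms hull_subset[of X convex] pc_zero pc_add[OF assms(2)] pc_scale[OF assms(2)] by auto

lemma hull_K:
  assumes "A \<subseteq> pc fs" "B \<subseteq> pc fs" "\<forall>f\<in>set fs. linear f"
  shows "convex hull (A \<union> B) \<subseteq> pc fs"
  using assms pc_convex[OF assms(3)] by (simp add: hull_minimal)

lemma sub_K4_1: "C0_1 \<subseteq> K4" unfolding C01 pc_def by auto
lemma sub_K4_2: "C0_2 \<subseteq> K4" unfolding C02 pc_def by auto
lemma sub_K4_3: "C0_3 \<subseteq> K4" unfolding C03 pc_def by auto
lemma sub_K23_2: "C0_2 \<subseteq> K23" unfolding C02 pc_def by auto
lemma sub_K23_3: "C0_3 \<subseteq> K23" unfolding C03 pc_def by auto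
lemma sub_K13_1: "C0_1 \<subseteq> K13" unfolding C01 pc_def by auto
lemma sub_K13_3: "C0_3 \<subseteq> K13" unfolding C03 pc_def by auto
lemma sub_K12_1: "C0_1 \<subseteq> K12" unfolding C01 pc_def by auto
lemma sub_K12_2: "C0_2 \<subseteq> K12" unfolding C02 pc_def by auto

lemma tr:
  assumes "C \<subseteq> A" "D \<subseteq> B" "\<And>x. (x \<in> A \<or> -x \<in> A) \<Longrightarrow> (x \<in> B \<or> -x \<in> B) \<Longrightarrow> x = 0"
  shows "transverse C D"
  unfolding transverse_def
proof
  fix z assume z: "z \<in> (C \<union> uminus ` C) \<inter> (D \<union> uminus ` D)"
  have i: "\<And>S. z \<in> uminus ` S \<Longrightarrow> -z \<in> S" by auto
  have "(z \<in> C \<or> -z \<in> C) \<and> (z \<in> D \<or> -z \<in> D)" using z i[of C] i[of D] by blast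
  then have "z = 0" using assms(1,2) assms(3)[of z] by blast
  then show "z \<in> {0}" by simp
qed

lemma ex1: "(x \<in> C0_1 \<or> -x \<in> C0_1) \<Longrightarrow> (x \<in> K23 \<or> -x \<in> K23) \<Longrightarrow> x = 0"
  unfolding C01 pc_def
  by (cases "x = 0") (simp_all, (elim disjE conjE; linarith))
lemma ex2: "(x \<in> C0_2 \<or> -x \<in> C0_2) \<Longrightarrow> (x \<in> K13 \<or> -x \<in> K13) \<Longrightarrow> x = 0"
  unfolding C02 pc_def
  by (cases "x = 0") (simp_all, (elim disjE conjE; linarith))
lemma ex3: "(x \<in> C0_3 \<or> -x \<in> C0_3) \<Longrightarrow> (x \<in> K12 \<or> -x \<in> K12) \<Longrightarrow> x = 0"
  unfolding C03 pc_def
  by (cases "x = 0") (simp_all, (elim disjE conjE; linarith))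

theorem lemma2:
  fixes m :: "nat^3" and P :: "nat^3 \<Rightarrow> real^3"
  assumes "\<forall>j. m$j \<ge> 2"
    and "convex hull (Dset m P 1) \<subseteq> C0_1"
    and "convex hull (Dset m P 2) \<subseteq> C0_2"
    and "convex hull (Dset m P 3) \<subseteq> C0_3"
  shows "cotransverse (coni (Dset m P 1)) (coni (Dset m P 2)) (coni (Dset m P 3))"
proof -
  have c1: "coni (Dset m P 1) \<subseteq> C0_1"
    unfolding C01 by (rule coni_C0[OF assms(2)[unfolded C01]]) (simp add: linear_iff algebra_simps)
  have c2: "coni (Dset m P 2) \<subseteq> C0_2"
    unfolding C02 by (rule coni_C0[OF assms(3)[unfolded C02]]) (simp add: linear_iff algebra_simps)
  have c3: "coni (Dset m P 3) \<subseteq> C0_3"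
    unfolding C03 by (rule coni_C0[OF assms(4)[unfolded C03]]) (simp add: linear_iff algebra_simps)
  have z: "\<And>X. 0 \<in> coni X" unfolding coni_def by force
  let ?U = "coni (Dset m P 1) \<union> coni (Dset m P 2) \<union> coni (Dset m P 3)"
  have hK4: "convex hull ?U \<subseteq> K4"
  proof (rule hull_minimal)
    show "?U \<subseteq> K4" using c1 c2 c3 sub_K4_1 sub_K4_2 sub_K4_3 by blast
    have "\<forall>f\<in>set [\<lambda>x::real^3. 1 * x$1 + 1 * x$2 + 1 * x$3]. linear f"
      by (simp add: linear_iff algebra_simps)
    then show "convex K4" by (rule pc_convex)
  qed
  have ext: "0 extreme_point_of (convex hull ?U)"
    unfolding extreme_point_of_def
  proof (intro conjI ballI)
    show "0 \<in> convex hull ?U" using z[of "Dset m P 1"] hull_subset[of ?U convex] by blast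
  next
    fix a b assume a: "a \<in> convex hull ?U" and b: "b \<in> convex hull ?U"
    show "0 \<notin> open_segment a b"
    proof
      assume "0 \<in> open_segment a b"
      then obtain u where u: "a \<noteq> b" "0 < u" "u < 1" "0 = (1-u) *\<^sub>R a + u *\<^sub>R b"
        unfolding in_segment(2) by blast
      have "a \<in> K4" "b \<in> K4" using a b hK4 by auto
      then have ha: "a = 0 \<or> a$1 + a$2 + a$3 > 0" and hb: "b = 0 \<or> b$1 + b$2 + b$3 > 0"
        unfolding pc_def by auto
      have e: "0 = (1-u) * (a$1 + a$2 + a$3) + u * (b$1 + b$2 + b$3)"
        using arg_cong[OF u(4), of "\<lambda>x. x$1 + x$2 + x$3"] by (simp add: algebra_simps)
      have "a = 0"
      proof (rule ccontr)
        assume "a \<noteq> 0"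
        then have "(1-u) * (a$1 + a$2 + a$3) > 0" using ha u by simp
        moreover have "u * (b$1 + b$2 + b$3) \<ge> 0" using hb u by auto
        ultimately show False using e by linarith
      qed
      moreover have "b = 0"
      proof (rule ccontr)
        assume "b \<noteq> 0"
        then have "u * (b$1 + b$2 + b$3) > 0" using hb u by simp
        moreover have "(1-u) * (a$1 + a$2 + a$3) \<ge> 0" using ha u by auto
        ultimately show False using e by linarith
      qed
      ultimately show False using u by simp
    qed
  qed
  have t1: "transverse (coni (Dset m P 1)) (convex hull (coni (Dset m P 2) \<union> coni (Dset m P 3)))"
    apply (rule tr[OF c1 _ ex1])
    apply (rule hull_K)
    using c2 sub_K23_2 apply blast
    using c3 sub_K23_3 apply blast
    by (simp add: linear_iff algebra_simps)
  have t2: "transverse (coni (Dset m P 2)) (convex hull (coni (Dset m P 1) \<union> coni (Dset m P 3)))"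
    apply (rule tr[OF c2 _ ex2])
    apply (rule hull_K)
    using c1 sub_K13_1 apply blast
    using c3 sub_K13_3 apply blast
    by (simp add: linear_iff algebra_simps)
  have t3: "transverse (coni (Dset m P 3)) (convex hull (coni (Dset m P 1) \<union> coni (Dset m P 2)))"
    apply (rule tr[OF c3 _ ex3])
    apply (rule hull_K)
    using c1 sub_K12_1 apply blast
    using c2 sub_K12_2 apply blast
    by (simp add: linear_iff algebra_simps)
  show ?thesis unfolding cotransverse_def using ext t1 t2 t3 by blast
qed

end
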